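(* Let $\mathcal T\in\Sigma^n$ be a text and $\pi$ be an order-preserving permutation for $\mathcal T$. For any string $P\in\Sigma^+$ that occurs in $\mathcal T$ there exists exactly one primary occurrence $P=\mathcal T[i,i+|P|-1]$. Furthermore, this occurrence is the one minimizing $\pi(i)$ among all occurrences of $P$.
   Context: A text is a string $\mathcal T\in\Sigma^n$ over an integer alphabet whose last symbol $\mathcal T[n]=\$$ occurs only there and is smallest. For $i\ne j$, $\mathrm{rlce}(i,j)$ is the length of the longest common prefix of $\mathcal T[i,n]$ and $\mathcal T[j,n]$. A permutation $\pi:[n]\to[n]$ is order-preserving for $\mathcal T$ if for all $i,j\in[n-1]$, $\pi(i)<\pi(j)$ and $\mathcal T[i,i+1]=\mathcal T[j,j+1]$ imply $\pi(i+1)<\pi(j+1)$. $\mathrm{LPF}_\pi[i]=0$ if $\pi(i)=1$, else $\mathrm{LPF}_\pi[i]=\max_{\pi(j)<\pi(i)}\mathrm{rlce}(j,i)$. An occurrence $\mathcal T[i,i+|P|-1]=P$ is primary if $\mathrm{LPF}_\pi[i]<|P|$, and secondary otherwise. *)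

theory Defs
  imports Main
begin

text \<open>Texts are lists; positions are 1-indexed as in the paper: position i of T is T ! (i - 1).\<close>

definition tchar :: "'a list \<Rightarrow> nat \<Rightarrow> 'a" where
  "tchar T i = T ! (i - 1)"

definition is_text :: "'a::linorder list \<Rightarrow> bool" where
  "is_text T \<longleftrightarrow> length T \<ge> 1 \<and>
     (\<forall>i\<in>{1..<length T}. tchar T (length T) < tchar T i)"

fun lcp_len :: "'a list \<Rightarrow> 'a list \<Rightarrow> nat" where
  "lcp_len (x # xs) (y # ys) = (if x = y then Suc (lcp_len xs ys) else 0)"
| "lcp_len _ _ = 0"

definition suffix_at :: "'a list \<Rightarrow> nat \<Rightarrow> 'a list" where
  "suffix_at T i = drop (i - 1) T"

definition rlce :: "'a list \<Rightarrow> nat \<Rightarrow> nat \<Rightarrow> nat" where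
  "rlce T i j = lcp_len (suffix_at T i) (suffix_at T j)"

definition order_preserving :: "'a list \<Rightarrow> (nat \<Rightarrow> nat) \<Rightarrow> bool" where
  "order_preserving T \<pi> \<longleftrightarrow>
     bij_betw \<pi> {1..length T} {1..length T} \<and>
     (\<forall>i\<in>{1..length T - 1}. \<forall>j\<in>{1..length T - 1}.
        \<pi> i < \<pi> j \<and> tchar T i = tchar T j \<and> tchar T (i+1) = tchar T (j+1)
        \<longrightarrow> \<pi> (i+1) < \<pi> (j+1))"

definition LPF :: "'a list \<Rightarrow> (nat \<Rightarrow> nat) \<Rightarrow> nat \<Rightarrow> nat" where
  "LPF T \<pi> i = (if \<pi> i = 1 then 0
     else Max {rlce T j i | j. j \<in> {1..length T} \<and> \<pi> j < \<pi> i})"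

definition occurs_at :: "'a list \<Rightarrow> 'a list \<Rightarrow> nat \<Rightarrow> bool" where
  "occurs_at T P i \<longleftrightarrow> 1 \<le> i \<and> i + length P - 1 \<le> length T \<and>
     (\<forall>k<length P. tchar T (i + k) = P ! k)"

definition primary_occ :: "'a list \<Rightarrow> (nat \<Rightarrow> nat) \<Rightarrow> 'a list \<Rightarrow> nat \<Rightarrow> bool" where
  "primary_occ T \<pi> P i \<longleftrightarrow> occurs_at T P i \<and> LPF T \<pi> i < length P"

end

theory Submission
  imports Defs
begin

lemma lcp_ge: "k \<le> lcp_len xs ys \<longleftrightarrow> k \<le> length xs \<and> k \<le> length ys \<and> take k xs = take k ys"
proof (induction xs ys arbitrary: k rule: lcp_len.induct)
  case (1 x xs y ys)
  then show ?case by (cases k) auto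
qed auto

lemma occ_take: assumes PN: "P \<noteq> []" shows "occurs_at T P i \<longleftrightarrow> 1 \<le> i \<and> take (length P) (suffix_at T i) = P"
proof
  assume a: "occurs_at T P i"
  then have "1 \<le> i" "i + length P - 1 \<le> length T" "\<forall>k<length P. T ! (i + k - 1) = P ! k"
    by (auto simp: occurs_at_def tchar_def)
  then show "1 \<le> i \<and> take (length P) (suffix_at T i) = P"
    by (auto simp: suffix_at_def intro!: nth_equalityI simp: add.commute)
next
  assume a: "1 \<le> i \<and> take (length P) (suffix_at T i) = P"
  then have l: "length P \<le> length T - (i - 1)"
    by (metis length_drop length_take min.cobounded1 suffix_at_def)
  have "\<forall>k<length P. T ! (i + k - 1) = P ! k"
  proof (intro allI impI)
    fix k assume "k < length P"
    then have "take (length P) (suffix_at T i) ! k = drop (i - 1) T ! k"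
      by (simp add: suffix_at_def)
    also have "\<dots> = T ! (i - 1 + k)" using l \<open>k < length P\<close> by (intro nth_drop) auto
    finally have "take (length P) (suffix_at T i) ! k = T ! (i - 1 + k)" .
    moreover have "i + k - 1 = i - 1 + k" using a by auto
    ultimately show "T ! (i + k - 1) = P ! k" using a by metis
  qed
  moreover have "i + length P - 1 \<le> length T" using l PN by (cases P) auto
  ultimately show "occurs_at T P i" using a by (auto simp: occurs_at_def tchar_def)
qed

lemma occ_rlce:
  assumes "P \<noteq> []" "occurs_at T P i" "occurs_at T P j"
  shows "length P \<le> rlce T j i"
proof -
  have "length P \<le> length (suffix_at T i)" "length P \<le> length (suffix_at T j)"
    using assms by (metis length_take min.bounded_iff occ_take order_refl assms(1))+
  then show ?thesis using assms unfolding rlce_def lcp_ge occ_take[OF assms(1)] by auto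
qed

lemma rlce_occ:
  assumes "P \<noteq> []" "occurs_at T P i" "1 \<le> j" "length P \<le> rlce T j i"
  shows "occurs_at T P j"
  using assms unfolding rlce_def lcp_ge occ_take[OF assms(1)] by metis

theorem lemma28:
  fixes T P :: "'a::linorder list" and \<pi> :: "nat \<Rightarrow> nat"
  assumes "is_text T"
    and "order_preserving T \<pi>"
    and "P \<noteq> []"
    and "\<exists>i. occurs_at T P i"
  shows "(\<exists>!i. primary_occ T \<pi> P i) \<and>
         (\<forall>i. primary_occ T \<pi> P i \<longrightarrow> (\<forall>j. occurs_at T P j \<longrightarrow> \<pi> i \<le> \<pi> j))"
proof -
  let ?n = "length T"
  have bij: "bij_betw \<pi> {1..?n} {1..?n}" using assms(2) by (simp add: order_preserving_def)
  have inj: "inj_on \<pi> {1..?n}" using bij_betw_imp_inj_on[OF bij] .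
  have rng: "\<And>x. x \<in> {1..?n} \<Longrightarrow> \<pi> x \<in> {1..?n}" using bij_betwE[OF bij] by blast
  have inn: "\<And>x. occurs_at T P x \<Longrightarrow> x \<in> {1..?n}"
    using assms(3) by (cases P) (auto simp: occurs_at_def)
  define S where "S = {x. occurs_at T P x}"
  have "S \<subseteq> {1..?n}" using inn unfolding S_def by blast
  then have "finite S" using finite_subset by blast
  have "S \<noteq> {}" using assms(4) S_def by auto
  obtain i where iS: "i \<in> S" and imin: "\<And>j. j \<in> S \<Longrightarrow> \<pi> i \<le> \<pi> j"
  proof -
    have "Min (\<pi> ` S) \<in> \<pi> ` S" using \<open>finite S\<close> \<open>S \<noteq> {}\<close> by simp
    then obtain i where i1: "i \<in> S" and i2: "\<pi> i = Min (\<pi> ` S)" by auto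
    have "\<And>j. j \<in> S \<Longrightarrow> Min (\<pi> ` S) \<le> \<pi> j" using \<open>finite S\<close> by simp
    then show ?thesis using i1 i2 by (intro that[of i]) auto
  qed
  have io: "occurs_at T P i" using iS S_def by auto
  have prim_i: "primary_occ T \<pi> P i"
  proof (cases "\<pi> i = 1")
    case True then show ?thesis using io assms(3) by (simp add: primary_occ_def LPF_def)
  next
    case False
    let ?A = "{rlce T j i | j. j \<in> {1..?n} \<and> \<pi> j < \<pi> i}"
    have fin: "finite ?A" by simp
    have ne: "?A \<noteq> {}"
    proof -
      have "\<pi> i \<in> {1..?n}" using rng inn io by blast
      then have "1 \<in> \<pi> ` {1..?n}" using bij by (auto simp: bij_betw_def)
      then obtain j where "j \<in> {1..?n}" "\<pi> j = 1" by auto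
      then show ?thesis using False \<open>\<pi> i \<in> {1..?n}\<close> by auto
    qed
    have "\<forall>a\<in>?A. a < length P"
    proof
      fix a assume "a \<in> ?A"
      then obtain j where j: "j \<in> {1..?n}" "\<pi> j < \<pi> i" "a = rlce T j i" by auto
      show "a < length P"
      proof (rule ccontr)
        assume "\<not> a < length P"
        then have "occurs_at T P j" using rlce_occ[OF assms(3) io] j by auto
        then show False using imin[of j] j S_def by auto
      qed
    qed
    then have "Max ?A < length P" using fin ne by simp
    then show ?thesis using io False by (simp add: primary_occ_def LPF_def)
  qed
  have uniq: "\<And>k. primary_occ T \<pi> P k \<Longrightarrow> k = i"
  proof (rule ccontr)
    fix k assume pk: "primary_occ T \<pi> P k" and ne: "k \<noteq> i"
    have ko: "occurs_at T P k" using pk primary_occ_def by blast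
    have "\<pi> k \<noteq> \<pi> i" using inj inn ko io ne by (meson inj_on_eq_iff)
    then have lt: "\<pi> i < \<pi> k" using imin[of k] ko S_def by auto
    have "\<pi> i \<ge> 1" using rng inn io by fastforce
    then have k1: "\<pi> k \<noteq> 1" using lt by auto
    let ?A = "{rlce T j k | j. j \<in> {1..?n} \<and> \<pi> j < \<pi> k}"
    have "rlce T i k \<in> ?A" using lt inn io by auto
    then have "rlce T i k \<le> Max ?A" by simp
    moreover have "length P \<le> rlce T i k" using occ_rlce[OF assms(3) ko io] .
    ultimately show False using pk k1 by (simp add: primary_occ_def LPF_def)
  qed
  show ?thesis
  proof
    show "\<exists>!i. primary_occ T \<pi> P i" using prim_i uniq by blast
    show "\<forall>i. primary_occ T \<pi> P i \<longrightarrow> (\<forall>j. occurs_at T P j \<longrightarrow> \<pi> i \<le> \<pi> j)"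
      using uniq imin S_def by auto
  qed
qed

end
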